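(* Let $V$ be a vertex operator algebra and $U$ a $V$-module that decomposes into generalised $L_{[0]}$-eigenspaces $U=\bigoplus_m U_{[m]}$. Suppose that the bracket $[x,y]=x_0y$ on $V_1$ makes $V_1$ a finite-dimensional reductive Lie algebra, so that each $U_{[m]}$ is a $V_1$-module via $a\mapsto a_0$. If $U_{[m]}$ is semisimple over $V_1$, write $U_{[m]}=U_{[m]}^{\mathrm{triv}}\oplus U_{[m]}^{\mathrm{non\text{-}triv}}$ for the unique decomposition into the maximal trivial submodule and its complement consisting of all non-trivial simple summands. Then for every $u\in U_{[m]}^{\mathrm{non\text{-}triv}}$, every $V$-module $W$ and every intertwining operator $\mathcal Y$ of type $\binom{W}{U\ W}$, one has $T^{\mathcal Y}(u,\tau)=0$.
   Context: $V$ has conformal vector $\omega$ and central charge $\mathbf c$; $a_n$ denotes the modes of $Y(a,z)=\sum a_nz^{-n-1}$. Square bracket modes on a module: $Y_U(a,e^z-1)e^{z\,\mathrm{wt}(a)}=\sum a_{[n]}z^{-n-1}$ for homogeneous $a$; $L_{[n]}$ are given by $\sum L_{[n]}z^{-n-2}$ for $a=\omega-\frac{\mathbf c}{24}\mathbf 1$, and $U_{[m]}=\{u:\exists N,(L_{[0]}-m)^Nu=0\}$. For an intertwining operator $\mathcal Y$ of type $\binom{W}{U\ W}$ and $L_0$-homogeneous $u$, $o^{\mathcal Y}(u)$ is the coefficient of $z^{-\mathrm{wt}(u)}$ in $\mathcal Y(u,z)$ (extended linearly), and the torus 1-point function is $T^{\mathcal Y}(u,\tau)=\mathrm{tr}_Wo^{\mathcal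 Y}(u)q^{L_0-\mathbf c/24}$, $q=e^{2\pi i\tau}$. *)

theory Defs
  imports Complex_Main "HOL-Computational_Algebra.Formal_Laurent_Series"
begin

text \<open>Sum of a finitely supported family (the families below are finitely supported
  by the truncation axioms; an infinite support gives 0 by convention of sum).\<close>
definition fsum :: "('i \<Rightarrow> 'b::comm_monoid_add) \<Rightarrow> 'b" where
  "fsum f = sum f {i. f i \<noteq> 0}"

definition fin_dim :: "(complex \<Rightarrow> 'b::ab_group_add \<Rightarrow> 'b) \<Rightarrow> 'b set \<Rightarrow> bool" where
  "fin_dim s S \<longleftrightarrow> module.subspace s S \<and> (\<exists>B. finite B \<and> B \<subseteq> S \<and> module.span s B = S)"

definition gen_eig :: "(complex \<Rightarrow> 'b::ab_group_add \<Rightarrow> 'b) \<Rightarrow> ('b \<Rightarrow> 'b) \<Rightarrow> complex \<Rightarrow> 'b set" where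
  "gen_eig s f lam = {x. \<exists>N. ((\<lambda>y. f y - s lam y) ^^ N) x = 0}"

definition gen_eig_decomp :: "(complex \<Rightarrow> 'b::ab_group_add \<Rightarrow> 'b) \<Rightarrow> ('b \<Rightarrow> 'b) \<Rightarrow> bool" where
  "gen_eig_decomp s f \<longleftrightarrow> (\<forall>x. \<exists>g::complex \<Rightarrow> 'b. finite {lam. g lam \<noteq> 0} \<and>
      (\<forall>lam. g lam \<in> gen_eig s f lam) \<and> x = sum g {lam. g lam \<noteq> 0})"

text \<open>Component of x in the generalised eigenspace for lam (well defined when the
  space decomposes, by uniqueness of the decomposition).\<close>
definition gen_comp :: "(complex \<Rightarrow> 'b::ab_group_add \<Rightarrow> 'b) \<Rightarrow> ('b \<Rightarrow> 'b) \<Rightarrow> 'b \<Rightarrow> complex \<Rightarrow> 'b" where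
  "gen_comp s f x = (THE g. finite {lam. g lam \<noteq> 0} \<and>
      (\<forall>lam. g lam \<in> gen_eig s f lam) \<and> x = sum g {lam. g lam \<noteq> 0})"

definition trace_on :: "(complex \<Rightarrow> 'b::ab_group_add \<Rightarrow> 'b) \<Rightarrow> 'b set \<Rightarrow> ('b \<Rightarrow> 'b) \<Rightarrow> complex" where
  "trace_on s S f = (SOME t. \<exists>B. finite B \<and> \<not> module.dependent s B \<and> module.span s B = S \<and>
       t = (\<Sum>b\<in>B. module.representation s B (f b) b))"

text \<open>Modes: Y a n b is a_n b, where Y(a,z) = sum_n a_n z^(-n-1).\<close>

definition sgn_pow :: "int \<Rightarrow> complex" where
  "sgn_pow r = (if even r then 1 else -1)"

definition is_voa ::
  "(complex \<Rightarrow> 'v::ab_group_add \<Rightarrow> 'v) \<Rightarrow> ('v \<Rightarrow> int \<Rightarrow> 'v \<Rightarrow> 'v) \<Rightarrow> 'v \<Rightarrow> 'v \<Rightarrow> complex \<Rightarrow> bool" where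
  "is_voa s Y vac om c \<longleftrightarrow>
     vector_space s \<and>
     (\<forall>a n. Vector_Spaces.linear s s (Y a n)) \<and>
     (\<forall>n b. Vector_Spaces.linear s s (\<lambda>a. Y a n b)) \<and>
     (\<forall>a b. \<exists>N. \<forall>n\<ge>N. Y a n b = 0) \<and>
     (\<forall>n b. Y vac n b = (if n = -1 then b else 0)) \<and>
     (\<forall>a. Y a (-1) vac = a \<and> (\<forall>n\<ge>0. Y a n vac = 0)) \<and>
     (\<forall>a b v m n r.
        fsum (\<lambda>i::nat. s (of_int m gchoose i) (Y (Y a (r + int i) b) (m + n - int i) v)) =
        fsum (\<lambda>i::nat. s ((-1) ^ i * (of_int r gchoose i))
              (Y a (m + r - int i) (Y b (n + int i) v)
               - s (sgn_pow r) (Y b (n + r - int i) (Y a (m + int i) v))))) \<and>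
     (\<forall>m n v. Y om (m + 1) (Y om (n + 1) v) - Y om (n + 1) (Y om (m + 1) v) =
        s (of_int (m - n)) (Y om (m + n + 1) v)
        + (if m + n = 0 then s ((of_int m ^ 3 - of_int m) / 12 * c) v else 0)) \<and>
     (\<forall>a n v. Y (Y om 0 a) n v = s (- of_int n) (Y a (n - 1) v)) \<and>
     (\<forall>v. \<exists>g::int \<Rightarrow> 'v. finite {n. g n \<noteq> 0} \<and> (\<forall>n. Y om 1 (g n) = s (of_int n) (g n)) \<and>
          v = sum g {n. g n \<noteq> 0}) \<and>
     (\<forall>n::int. fin_dim s {v. Y om 1 v = s (of_int n) v}) \<and>
     (\<exists>N::int. \<forall>n<N. \<forall>v. Y om 1 v = s (of_int n) v \<longrightarrow> v = 0)"

text \<open>Weak V-module (Jacobi identity in Borcherds component form).\<close>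
definition is_weak_module ::
  "(complex \<Rightarrow> 'v::ab_group_add \<Rightarrow> 'v) \<Rightarrow> ('v \<Rightarrow> int \<Rightarrow> 'v \<Rightarrow> 'v) \<Rightarrow> 'v \<Rightarrow>
   (complex \<Rightarrow> 'w::ab_group_add \<Rightarrow> 'w) \<Rightarrow> ('v \<Rightarrow> int \<Rightarrow> 'w \<Rightarrow> 'w) \<Rightarrow> bool" where
  "is_weak_module s Y vac sW YW \<longleftrightarrow>
     vector_space sW \<and>
     (\<forall>a n. Vector_Spaces.linear sW sW (YW a n)) \<and>
     (\<forall>n w. Vector_Spaces.linear s sW (\<lambda>a. YW a n w)) \<and>
     (\<forall>a w. \<exists>N. \<forall>n\<ge>N. YW a n w = 0) \<and>
     (\<forall>n w. YW vac n w = (if n = -1 then w else 0)) \<and>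
     (\<forall>a b w m n r.
        fsum (\<lambda>i::nat. sW (of_int m gchoose i) (YW (Y a (r + int i) b) (m + n - int i) w)) =
        fsum (\<lambda>i::nat. sW ((-1) ^ i * (of_int r gchoose i))
              (YW a (m + r - int i) (YW b (n + int i) w)
               - sW (sgn_pow r) (YW b (n + r - int i) (YW a (m + int i) w)))))"

text \<open>V-module: a weak module which is the direct sum of finite-dimensional generalised
  L_0-eigenspaces, lower bounded in each coset of the integers (grading-restricted
  generalised module).\<close>
definition is_module ::
  "(complex \<Rightarrow> 'v::ab_group_add \<Rightarrow> 'v) \<Rightarrow> ('v \<Rightarrow> int \<Rightarrow> 'v \<Rightarrow> 'v) \<Rightarrow> 'v \<Rightarrow> 'v \<Rightarrow>
   (complex \<Rightarrow> 'w::ab_group_add \<Rightarrow> 'w) \<Rightarrow> ('v \<Rightarrow> int \<Rightarrow> 'w \<Rightarrow> 'w) \<Rightarrow> bool" where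
  "is_module s Y vac om sW YW \<longleftrightarrow>
     is_weak_module s Y vac sW YW \<and>
     gen_eig_decomp sW (YW om 1) \<and>
     (\<forall>lam. fin_dim sW (gen_eig sW (YW om 1) lam)) \<and>
     (\<forall>lam. \<exists>K. \<forall>k\<ge>K. gen_eig sW (YW om 1) (lam - of_nat k) = {0})"

text \<open>Intertwining operator of type (W over U W): I u n w = u_(n) w,
  where Y(u,z) = sum over complex n of u_(n) z^(-n-1).\<close>
definition is_intertwining ::
  "(complex \<Rightarrow> 'v::ab_group_add \<Rightarrow> 'v) \<Rightarrow> ('v \<Rightarrow> int \<Rightarrow> 'v \<Rightarrow> 'v) \<Rightarrow> 'v \<Rightarrow> 'v \<Rightarrow>
   (complex \<Rightarrow> 'u::ab_group_add \<Rightarrow> 'u) \<Rightarrow> ('v \<Rightarrow> int \<Rightarrow> 'u \<Rightarrow> 'u) \<Rightarrow>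
   (complex \<Rightarrow> 'w::ab_group_add \<Rightarrow> 'w) \<Rightarrow> ('v \<Rightarrow> int \<Rightarrow> 'w \<Rightarrow> 'w) \<Rightarrow>
   ('u \<Rightarrow> complex \<Rightarrow> 'w \<Rightarrow> 'w) \<Rightarrow> bool" where
  "is_intertwining s Y vac om sU YU sW YW I \<longleftrightarrow>
     (\<forall>u n. Vector_Spaces.linear sW sW (I u n)) \<and>
     (\<forall>n w. Vector_Spaces.linear sU sW (\<lambda>u. I u n w)) \<and>
     (\<forall>u w n. \<exists>K. \<forall>k\<ge>K. I u (n + of_nat k) w = 0) \<and>
     (\<forall>a u w m r (n::complex).
        fsum (\<lambda>i::nat. sW (of_int m gchoose i) (I (YU a (r + int i) u) (of_int m + n - of_nat i) w)) =
        fsum (\<lambda>i::nat. sW ((-1) ^ i * (of_int r gchoose i))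
              (YW a (m + r - int i) (I u (n + of_nat i) w)
               - sW (sgn_pow r) (I u (n + of_int r - of_nat i) (YW a (m + int i) w))))) \<and>
     (\<forall>u n w. I (YU om 0 u) n w = sW (- n) (I u (n - 1) w))"

definition sq_coeff :: "int \<Rightarrow> int \<Rightarrow> complex \<Rightarrow> complex" where
  "sq_coeff n k w = fls_nth ((fps_to_fls (fps_exp 1 - 1)) powi (- n - 1) * fps_to_fls (fps_exp w)) (- k - 1)"

text \<open>a_[k] for homogeneous a of weight wt: Y_U(a, e^z - 1) e^(z wt) = sum_k a_[k] z^(-k-1).\<close>
definition sq_mode :: "(complex \<Rightarrow> 'u::ab_group_add \<Rightarrow> 'u) \<Rightarrow> ('v \<Rightarrow> int \<Rightarrow> 'u \<Rightarrow> 'u) \<Rightarrow>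
    'v \<Rightarrow> complex \<Rightarrow> int \<Rightarrow> 'u \<Rightarrow> 'u" where
  "sq_mode sU YU a wt k u = fsum (\<lambda>n::int. sU (sq_coeff n k wt) (YU a n u))"

text \<open>L_[n] is the coefficient of z^(-n-2) for a = omega - c/24 vac (omega of weight 2,
  vac of weight 0), i.e. L_[n] = omega_[n+1] - c/24 vac_[n+1].\<close>
definition L_sq :: "(complex \<Rightarrow> 'u::ab_group_add \<Rightarrow> 'u) \<Rightarrow> ('v \<Rightarrow> int \<Rightarrow> 'u \<Rightarrow> 'u) \<Rightarrow>
    'v \<Rightarrow> 'v \<Rightarrow> complex \<Rightarrow> int \<Rightarrow> 'u \<Rightarrow> 'u" where
  "L_sq sU YU vac om c n u = sq_mode sU YU om 2 (n + 1) u - sU (c / 24) (sq_mode sU YU vac 0 (n + 1) u)"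

definition U_sq :: "(complex \<Rightarrow> 'u::ab_group_add \<Rightarrow> 'u) \<Rightarrow> ('v \<Rightarrow> int \<Rightarrow> 'u \<Rightarrow> 'u) \<Rightarrow>
    'v \<Rightarrow> 'v \<Rightarrow> complex \<Rightarrow> complex \<Rightarrow> 'u set" where
  "U_sq sU YU vac om c m = gen_eig sU (L_sq sU YU vac om c 0) m"

text \<open>Zero mode o(u): for L_0-homogeneous u of weight wt, the coefficient of z^(-wt)
  in Y(u,z), i.e. u_(wt-1); extended linearly along the decomposition of u into
  generalised L_0-eigenvectors.\<close>
definition zero_mode :: "(complex \<Rightarrow> 'u::ab_group_add \<Rightarrow> 'u) \<Rightarrow> ('v \<Rightarrow> int \<Rightarrow> 'u \<Rightarrow> 'u) \<Rightarrow> 'v \<Rightarrow>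
    ('u \<Rightarrow> complex \<Rightarrow> 'w::ab_group_add \<Rightarrow> 'w) \<Rightarrow> 'u \<Rightarrow> 'w \<Rightarrow> 'w" where
  "zero_mode sU YU om I u w =
     (\<Sum>lam\<in>{lam. gen_comp sU (YU om 1) u lam \<noteq> 0}. I (gen_comp sU (YU om 1) u lam) (lam - 1) w)"

text \<open>q^(L_0 - c/24) with q = e^(2 pi i tau) on the generalised eigenspace W_[lam]:
  e^(2 pi i tau (lam - c/24)) exp(2 pi i tau (L_0 - lam)), the latter being nilpotent.\<close>
definition q_op :: "(complex \<Rightarrow> 'w::ab_group_add \<Rightarrow> 'w) \<Rightarrow> ('w \<Rightarrow> 'w) \<Rightarrow> complex \<Rightarrow>
    complex \<Rightarrow> complex \<Rightarrow> 'w \<Rightarrow> 'w" where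
  "q_op sW L0 c tau lam w =
     sW (exp (2 * pi * \<i> * tau * (lam - c / 24)))
       (fsum (\<lambda>k::nat. sW ((2 * pi * \<i> * tau) ^ k / fact k) (((\<lambda>y. L0 y - sW lam y) ^^ k) w)))"

text \<open>T^I(u,tau) = tr_W o(u) q^(L_0 - c/24) vanishes: as a (generalised) q-series, all
  its graded pieces tr_{W_[lam]} o(u) q^(L_0-c/24) vanish identically in tau.\<close>
definition torus_1pt_zero :: "(complex \<Rightarrow> 'u::ab_group_add \<Rightarrow> 'u) \<Rightarrow> ('v \<Rightarrow> int \<Rightarrow> 'u \<Rightarrow> 'u) \<Rightarrow>
    'v \<Rightarrow> complex \<Rightarrow> (complex \<Rightarrow> 'w::ab_group_add \<Rightarrow> 'w) \<Rightarrow> ('v \<Rightarrow> int \<Rightarrow> 'w \<Rightarrow> 'w) \<Rightarrow>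
    ('u \<Rightarrow> complex \<Rightarrow> 'w \<Rightarrow> 'w) \<Rightarrow> 'u \<Rightarrow> bool" where
  "torus_1pt_zero sU YU om c sW YW I u \<longleftrightarrow>
     (\<forall>lam tau. trace_on sW (gen_eig sW (YW om 1) lam)
        (\<lambda>w. zero_mode sU YU om I u (q_op sW (YW om 1) c tau lam w)) = 0)"

definition V1 :: "('v \<Rightarrow> int \<Rightarrow> 'v \<Rightarrow> 'v) \<Rightarrow> (complex \<Rightarrow> 'v \<Rightarrow> 'v) \<Rightarrow> 'v \<Rightarrow> 'v set" where
  "V1 Y s om = {v. Y om 1 v = s 1 v}"

definition is_submod :: "(complex \<Rightarrow> 'b::ab_group_add \<Rightarrow> 'b) \<Rightarrow> 'a set \<Rightarrow> ('a \<Rightarrow> 'b \<Rightarrow> 'b) \<Rightarrow> 'b set \<Rightarrow> bool" where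
  "is_submod s A act S \<longleftrightarrow> module.subspace s S \<and> (\<forall>a\<in>A. \<forall>x\<in>S. act a x \<in> S)"

definition is_simple_submod :: "(complex \<Rightarrow> 'b::ab_group_add \<Rightarrow> 'b) \<Rightarrow> 'a set \<Rightarrow> ('a \<Rightarrow> 'b \<Rightarrow> 'b) \<Rightarrow> 'b set \<Rightarrow> bool" where
  "is_simple_submod s A act S \<longleftrightarrow> is_submod s A act S \<and> S \<noteq> {0} \<and>
     (\<forall>T. is_submod s A act T \<and> T \<subseteq> S \<longrightarrow> T = {0} \<or> T = S)"

definition is_semisimple :: "(complex \<Rightarrow> 'b::ab_group_add \<Rightarrow> 'b) \<Rightarrow> 'a set \<Rightarrow> ('a \<Rightarrow> 'b \<Rightarrow> 'b) \<Rightarrow> 'b set \<Rightarrow> bool" where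
  "is_semisimple s A act M \<longleftrightarrow> is_submod s A act M \<and>
     module.span s (\<Union>{S. is_simple_submod s A act S \<and> S \<subseteq> M}) = M"

text \<open>Lie algebra structure [x,y] = x_0 y on V_1, reductive = adjoint representation
  semisimple, finite-dimensional.\<close>
definition V1_reductive_lie :: "(complex \<Rightarrow> 'v::ab_group_add \<Rightarrow> 'v) \<Rightarrow> ('v \<Rightarrow> int \<Rightarrow> 'v \<Rightarrow> 'v) \<Rightarrow> 'v \<Rightarrow> bool" where
  "V1_reductive_lie s Y om \<longleftrightarrow>
     fin_dim s (V1 Y s om) \<and>
     (\<forall>x\<in>V1 Y s om. \<forall>y\<in>V1 Y s om. Y x 0 y \<in> V1 Y s om) \<and>
     (\<forall>x\<in>V1 Y s om. \<forall>y\<in>V1 Y s om. Y x 0 y = - Y y 0 x) \<and>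
     (\<forall>x\<in>V1 Y s om. \<forall>y\<in>V1 Y s om. \<forall>z\<in>V1 Y s om.
        Y x 0 (Y y 0 z) + Y y 0 (Y z 0 x) + Y z 0 (Y x 0 y) = 0) \<and>
     is_semisimple s (V1 Y s om) (\<lambda>x y. Y x 0 y) (V1 Y s om)"

definition nontriv_part :: "(complex \<Rightarrow> 'b::ab_group_add \<Rightarrow> 'b) \<Rightarrow> 'a set \<Rightarrow> ('a \<Rightarrow> 'b \<Rightarrow> 'b) \<Rightarrow> 'b set \<Rightarrow> 'b set" where
  "nontriv_part s A act M = module.span s (\<Union>{S. is_simple_submod s A act S \<and> S \<subseteq> M \<and>
      (\<exists>a\<in>A. \<exists>x\<in>S. act a x \<noteq> 0)})"

definition triv_part :: "'a set \<Rightarrow> ('a \<Rightarrow> 'b::zero \<Rightarrow> 'b) \<Rightarrow> 'b set \<Rightarrow> 'b set" where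
  "triv_part A act M = {x\<in>M. \<forall>a\<in>A. act a x = 0}"

end

theory Submission
  imports Defs
begin


lemma lin_mh: "Vector_Spaces.linear s1 s2 f \<Longrightarrow> module_hom s1 s2 f"
  by (simp add: linear_iff_module_hom)

lemma lin_add: "Vector_Spaces.linear s1 s2 f \<Longrightarrow> f (x + y) = f x + f y"
  using lin_mh module_hom.add by blast
lemma lin_scale: "Vector_Spaces.linear s1 s2 f \<Longrightarrow> f (s1 c x) = s2 c (f x)"
  using lin_mh module_hom.scale by blast
lemma lin_zero: "Vector_Spaces.linear s1 s2 f \<Longrightarrow> f 0 = 0"
  using lin_mh module_hom.zero by blast
lemma lin_diff: "Vector_Spaces.linear s1 s2 f \<Longrightarrow> f (x - y) = f x - f y"
  using lin_mh module_hom.diff by blast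
lemma lin_sum: "Vector_Spaces.linear s1 s2 f \<Longrightarrow> f (sum g A) = (\<Sum>a\<in>A. f (g a))"
  using lin_mh module_hom.sum by blast

lemma linI:
  assumes "vector_space s1" "vector_space s2" "\<And>x y. f (x + y) = f x + f y" "\<And>c x. f (s1 c x) = s2 c (f x)"
  shows "Vector_Spaces.linear s1 s2 f"
  using assms unfolding Vector_Spaces.linear_def module_hom_def module_hom_axioms_def
  by (simp add: module_iff_vector_space)

lemma fsum_eq: "finite F \<Longrightarrow> (\<And>i. i \<notin> F \<Longrightarrow> f i = 0) \<Longrightarrow> fsum f = sum f F"
  unfolding fsum_def by (rule sum.mono_neutral_left) auto

definition Dp :: "('a::field \<Rightarrow> 'b::ab_group_add \<Rightarrow> 'b) \<Rightarrow> ('b \<Rightarrow> 'b) \<Rightarrow> 'a \<Rightarrow> nat \<Rightarrow> 'b \<Rightarrow> 'b"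
  where "Dp s f lam N = ((\<lambda>y. f y - s lam y) ^^ N)"

lemma Dp_0[simp]: "Dp s f lam 0 x = x" by (simp add: Dp_def)
lemma Dp_Suc: "Dp s f lam (Suc N) x = f (Dp s f lam N x) - s lam (Dp s f lam N x)" by (simp add: Dp_def)
lemma Dp_Suc': "Dp s f lam (Suc N) x = Dp s f lam N (f x - s lam x)" by (simp add: Dp_def funpow_Suc_right del: funpow.simps)
lemma Dp_add: "Dp s f lam (N + M) x = Dp s f lam N (Dp s f lam M x)" by (simp add: Dp_def funpow_add)
lemma gen_eig_Dp: "gen_eig s f lam = {x. \<exists>N. Dp s f lam N x = 0}" by (simp add: Dp_def gen_eig_def)

locale cvs = vector_space s for s :: "complex \<Rightarrow> 'b::ab_group_add \<Rightarrow> 'b"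
begin

lemma Dp_lin:
  assumes "Vector_Spaces.linear s s f"
  shows "Vector_Spaces.linear s s (Dp s f lam N)"
proof (induction N)
  case 0 then show ?case using linear_id by (simp add: id_def Dp_def)
next
  case (Suc N)
  have g: "Vector_Spaces.linear s s (\<lambda>y. f y - s lam y)"
    by (rule linI[OF vector_space_axioms vector_space_axioms])
       (simp_all add: lin_add[OF assms] lin_scale[OF assms] algebra_simps)
  have "Dp s f lam (Suc N) = (\<lambda>y. f y - s lam y) o Dp s f lam N" by (simp add: Dp_def)
  then show ?case using Vector_Spaces.linear_compose[OF Suc g] by (simp only:)
qed

lemma Dp_comm:
  assumes "\<And>y. T (f y) = f (T y)" "\<And>c y. T (s c y) = s c (T y)" "\<And>x y. T (x - y) = T x - T y"
  shows "T (Dp s f lam N x) = Dp s f lam N (T x)"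
  by (induction N arbitrary: x) (simp_all add: assms Dp_Suc)

lemma Dp_high:
  assumes lin: "Vector_Spaces.linear s s f" and "Dp s f lam N x = 0" "N \<le> k"
  shows "Dp s f lam k x = 0"
proof -
  have "Dp s f lam k x = Dp s f lam (k - N) (Dp s f lam N x)"
    using \<open>N \<le> k\<close> by (metis Dp_add le_add_diff_inverse2)
  then show ?thesis using assms lin_zero[OF Dp_lin[OF lin]] by simp
qed

lemma gen_eig_subspace:
  assumes lin: "Vector_Spaces.linear s s f"
  shows "subspace (gen_eig s f lam)"
  unfolding subspace_def
proof (intro conjI ballI allI)
  show "0 \<in> gen_eig s f lam" unfolding gen_eig_Dp by (auto intro: exI[of _ 0])
next
  fix x y assume "x \<in> gen_eig s f lam" "y \<in> gen_eig s f lam"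
  then obtain N M where NM: "Dp s f lam N x = 0" "Dp s f lam M y = 0" unfolding gen_eig_Dp by blast
  have "Dp s f lam (N+M) x = 0" "Dp s f lam (N+M) y = 0"
    using Dp_high[OF lin NM(1)] Dp_high[OF lin NM(2)] by auto
  then have "Dp s f lam (N+M) (x + y) = 0" using lin_add[OF Dp_lin[OF lin]] by simp
  then show "x + y \<in> gen_eig s f lam" unfolding gen_eig_Dp by blast
next
  fix c x assume "x \<in> gen_eig s f lam"
  then obtain N where N: "Dp s f lam N x = 0" unfolding gen_eig_Dp by blast
  have "Dp s f lam N (s c x) = s c (Dp s f lam N x)" using lin_scale[OF Dp_lin[OF lin]] by blast
  then have "Dp s f lam N (s c x) = 0" using N by simp
  then show "s c x \<in> gen_eig s f lam" unfolding gen_eig_Dp by blast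
qed

lemma Dp_eig:
  assumes lin: "Vector_Spaces.linear s s f" and fx: "f x = s mu x"
  shows "Dp s f lam N x = s ((mu - lam) ^ N) x"
  by (induction N) (simp_all add: Dp_Suc lin_scale[OF lin] fx algebra_simps)

lemma Dp_inj:
  assumes lin: "Vector_Spaces.linear s s f" and "lam \<noteq> mu" "x \<in> gen_eig s f lam" "f x - s mu x = 0"
  shows "x = 0"
proof -
  obtain N where N: "Dp s f lam N x = 0" using assms(3) by (auto simp: gen_eig_Dp)
  have "f x = s mu x" using assms(4) by simp
  then have "s ((mu - lam) ^ N) x = 0" using Dp_eig[OF lin] N by metis
  then show ?thesis using assms(2) by simp
qed

lemma f_comm_Dp:
  assumes lin: "Vector_Spaces.linear s s f"
  shows "f (Dp s f lam N x) = Dp s f lam N (f x)"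
  by (rule Dp_comm) (simp_all add: lin_scale[OF lin] lin_diff[OF lin])

lemma Dp_comm_Dp:
  assumes lin: "Vector_Spaces.linear s s f"
  shows "Dp s f mu K (Dp s f lam N x) = Dp s f lam N (Dp s f mu K x)"
  by (rule Dp_comm) (simp_all add: f_comm_Dp[OF lin] lin_scale[OF Dp_lin[OF lin]] lin_diff[OF Dp_lin[OF lin]])

lemma Dp_pres:
  assumes lin: "Vector_Spaces.linear s s f" and "x \<in> gen_eig s f lam"
  shows "Dp s f mu K x \<in> gen_eig s f lam"
proof -
  obtain N where N: "Dp s f lam N x = 0" using assms(2) by (auto simp: gen_eig_Dp)
  then have "Dp s f lam N (Dp s f mu K x) = 0"
    using Dp_comm_Dp[OF lin] lin_zero[OF Dp_lin[OF lin]] by metis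
  then show ?thesis by (auto simp: gen_eig_Dp)
qed

lemma Dp_inj_pow:
  assumes lin: "Vector_Spaces.linear s s f" and "lam \<noteq> mu"
  shows "x \<in> gen_eig s f lam \<Longrightarrow> Dp s f mu K x = 0 \<Longrightarrow> x = 0"
proof (induction K arbitrary: x)
  case 0 then show ?case by simp
next
  case (Suc K)
  have "f x - s mu x \<in> gen_eig s f lam"
    using Dp_pres[OF lin Suc.prems(1), where mu=mu and K=1] by (simp add: Dp_Suc)
  moreover have "Dp s f mu K (f x - s mu x) = 0" using Suc.prems(2) by (simp add: Dp_Suc')
  ultimately have "f x - s mu x = 0" using Suc.IH by blast
  then show ?case using Dp_inj[OF lin assms(2) Suc.prems(1)] by blast
qed

lemma gen_eig_indep:
  assumes lin: "Vector_Spaces.linear s s f"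
  shows "finite F \<Longrightarrow> (\<And>lam. lam \<in> F \<Longrightarrow> g lam \<in> gen_eig s f lam) \<Longrightarrow> sum g F = 0 \<Longrightarrow> lam \<in> F \<Longrightarrow> g lam = 0"
proof (induction F arbitrary: g lam rule: finite_induct)
  case empty then show ?case by simp
next
  case (insert mu F)
  have gmu: "g mu \<in> gen_eig s f mu" using insert.prems(1) by blast
  then obtain K where K: "Dp s f mu K (g mu) = 0" unfolding gen_eig_Dp by blast
  have L: "Vector_Spaces.linear s s (Dp s f mu K)" by (rule Dp_lin[OF lin])
  have "Dp s f mu K (sum g (insert mu F)) = 0" using insert.prems(2) lin_zero[OF L] by simp
  moreover have "Dp s f mu K (sum g (insert mu F)) = Dp s f mu K (g mu) + (\<Sum>l\<in>F. Dp s f mu K (g l))"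
    using insert.hyps lin_add[OF L] lin_sum[OF L] by simp
  ultimately have sum0: "(\<Sum>l\<in>F. Dp s f mu K (g l)) = 0" using K by simp
  have mem: "Dp s f mu K (g l) \<in> gen_eig s f l" if "l \<in> F" for l
    using Dp_pres[OF lin] insert.prems(1) that by blast
  have z: "Dp s f mu K (g l) = 0" if "l \<in> F" for l
    using insert.IH[where g="\<lambda>l. Dp s f mu K (g l)" and lam=l, OF mem sum0 that] .
  have gF: "g l = 0" if "l \<in> F" for l
  proof -
    have "l \<noteq> mu" using that insert.hyps(2) by blast
    moreover have "g l \<in> gen_eig s f l" using insert.prems(1) that by blast
    ultimately show ?thesis using Dp_inj_pow[OF lin _ _ z[OF that]] by blast
  qed
  then have "sum g F = 0" by simp
  then have "g mu = 0" using insert.prems(2) insert.hyps by simp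
  then show ?case using gF insert.prems(3) by blast
qed

definition dec :: "('b \<Rightarrow> 'b) \<Rightarrow> (complex \<Rightarrow> 'b) \<Rightarrow> 'b \<Rightarrow> bool" where
  "dec f g x \<longleftrightarrow> finite {lam. g lam \<noteq> 0} \<and> (\<forall>lam. g lam \<in> gen_eig s f lam) \<and> x = sum g {lam. g lam \<noteq> 0}"

lemma dec_intro:
  assumes "finite F" "\<And>lam. g lam \<in> gen_eig s f lam" "\<And>lam. lam \<notin> F \<Longrightarrow> g lam = 0" "x = sum g F"
  shows "dec f g x"
proof -
  have sub: "{lam. g lam \<noteq> 0} \<subseteq> F" using assms(3) by blast
  have "sum g F = sum g {lam. g lam \<noteq> 0}"
    by (rule sum.mono_neutral_right[OF assms(1) sub]) auto
  then show ?thesis unfolding dec_def using assms finite_subset[OF sub] by auto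
qed

lemma dec_sum:
  assumes "dec f g x" "finite F" "{lam. g lam \<noteq> 0} \<subseteq> F"
  shows "x = sum g F"
proof -
  have "sum g {lam. g lam \<noteq> 0} = sum g F"
    by (rule sum.mono_neutral_left[OF assms(2,3)]) auto
  then show ?thesis using assms(1) unfolding dec_def by simp
qed

lemma dec_unique:
  assumes lin: "Vector_Spaces.linear s s f" and g: "dec f g x" and h: "dec f h x"
  shows "g = h"
proof
  fix lam
  let ?F = "{lam. g lam \<noteq> 0} \<union> {lam. h lam \<noteq> 0}"
  have fin: "finite ?F" using g h unfolding dec_def by auto
  have "sum g ?F = sum h ?F" using dec_sum[OF g fin] dec_sum[OF h fin] by auto
  then have "sum (\<lambda>l. g l - h l) ?F = 0" by (simp add: sum_subtractf)
  moreover have "g l - h l \<in> gen_eig s f l" for l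
    using g h subspace_diff[OF gen_eig_subspace[OF lin]] unfolding dec_def by blast
  ultimately have "g l - h l = 0" if "l \<in> ?F" for l
    using gen_eig_indep[OF lin fin, of "\<lambda>l. g l - h l"] that by blast
  then show "g lam = h lam" by (cases "lam \<in> ?F") auto
qed

lemma gen_comp_dec:
  assumes lin: "Vector_Spaces.linear s s f" and d: "gen_eig_decomp s f"
  shows "dec f (gen_comp s f x) x"
proof -
  obtain g where gx: "dec f g x" using d unfolding gen_eig_decomp_def dec_def by blast
  have "dec f (THE g. dec f g x) x"
    by (rule theI[where P="\<lambda>g. dec f g x", OF gx]) (use dec_unique[OF lin _ gx] in blast)
  then show ?thesis unfolding gen_comp_def dec_def[abs_def] .
qed

lemma gen_comp_eq:
  assumes lin: "Vector_Spaces.linear s s f" and d: "gen_eig_decomp s f" and "dec f g x"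
  shows "gen_comp s f x = g"
  using dec_unique[OF lin gen_comp_dec[OF lin d] assms(3)] .

lemma gen_comp_add:
  assumes lin: "Vector_Spaces.linear s s f" and d: "gen_eig_decomp s f"
  shows "gen_comp s f (x + y) = (\<lambda>l. gen_comp s f x l + gen_comp s f y l)"
proof (rule gen_comp_eq[OF lin d])
  let ?g = "gen_comp s f x" and ?h = "gen_comp s f y"
  have gx: "dec f ?g x" and hy: "dec f ?h y" using gen_comp_dec[OF lin d] by auto
  let ?F = "{lam. ?g lam \<noteq> 0} \<union> {lam. ?h lam \<noteq> 0}"
  have fin: "finite ?F" using gx hy unfolding dec_def by auto
  show "dec f (\<lambda>l. ?g l + ?h l) (x + y)"
  proof (rule dec_intro[OF fin])
    show "?g l + ?h l \<in> gen_eig s f l" for l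
      using gx hy subspace_add[OF gen_eig_subspace[OF lin]] unfolding dec_def by blast
    show "l \<notin> ?F \<Longrightarrow> ?g l + ?h l = 0" for l by auto
    show "x + y = (\<Sum>l\<in>?F. ?g l + ?h l)"
      using dec_sum[OF gx fin] dec_sum[OF hy fin] by (simp add: sum.distrib)
  qed
qed

lemma gen_comp_map:
  assumes lin: "Vector_Spaces.linear s s f" and d: "gen_eig_decomp s f"
    and T: "Vector_Spaces.linear s s T" and Tc: "\<And>y. T (f y) = f (T y)"
  shows "gen_comp s f (T x) = (\<lambda>l. T (gen_comp s f x l))"
proof (rule gen_comp_eq[OF lin d])
  let ?g = "gen_comp s f x"
  have gx: "dec f ?g x" using gen_comp_dec[OF lin d] by auto
  let ?F = "{lam. ?g lam \<noteq> 0}"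
  have fin: "finite ?F" using gx unfolding dec_def by auto
  show "dec f (\<lambda>l. T (?g l)) (T x)"
  proof (rule dec_intro[OF fin])
    show "T (?g l) \<in> gen_eig s f l" for l
    proof -
      obtain N where "Dp s f l N (?g l) = 0" using gx unfolding dec_def gen_eig_Dp by blast
      moreover have "T (Dp s f l N (?g l)) = Dp s f l N (T (?g l))"
        by (rule Dp_comm) (simp_all add: Tc lin_scale[OF T] lin_diff[OF T])
      ultimately show ?thesis unfolding gen_eig_Dp using lin_zero[OF T] by auto
    qed
    show "l \<notin> ?F \<Longrightarrow> T (?g l) = 0" for l using lin_zero[OF T] by auto
    have "T x = T (sum ?g ?F)" using dec_sum[OF gx fin] by simp
    then show "T x = (\<Sum>l\<in>?F. T (?g l))"
      using lin_sum[OF T] by simp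
  qed
qed

definition tr :: "'b set \<Rightarrow> ('b \<Rightarrow> 'b) \<Rightarrow> complex" where
  "tr B f = (\<Sum>b\<in>B. representation B (f b) b)"

lemma tr_cong: "(\<And>b. b \<in> B \<Longrightarrow> f b = g b) \<Longrightarrow> tr B f = tr B g"
  unfolding tr_def by simp

lemma tr_sum:
  assumes "independent B" "\<And>i b. i \<in> I \<Longrightarrow> b \<in> B \<Longrightarrow> h i b \<in> span B"
  shows "tr B (\<lambda>x. \<Sum>i\<in>I. h i x) = (\<Sum>i\<in>I. tr B (h i))"
  unfolding tr_def using assms by (simp add: representation_sum sum.swap[of _ B])

lemma tr_add:
  assumes "independent B" "\<And>b. b \<in> B \<Longrightarrow> f b \<in> span B" "\<And>b. b \<in> B \<Longrightarrow> g b \<in> span B"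
  shows "tr B (\<lambda>x. f x + g x) = tr B f + tr B g"
  unfolding tr_def using assms by (simp add: representation_add sum.distrib)

lemma tr_zero: "tr B (\<lambda>x. 0) = 0"
  unfolding tr_def by (simp add: representation_zero)

lemma tr_diff:
  assumes "independent B" "\<And>b. b \<in> B \<Longrightarrow> f b \<in> span B" "\<And>b. b \<in> B \<Longrightarrow> g b \<in> span B"
  shows "tr B (\<lambda>x. f x - g x) = tr B f - tr B g"
  unfolding tr_def using assms by (simp add: representation_diff sum_subtractf)

lemma tr_scale:
  assumes "independent B" "\<And>b. b \<in> B \<Longrightarrow> f b \<in> span B"
  shows "tr B (\<lambda>x. s c (f x)) = c * tr B f"
  unfolding tr_def using assms by (simp add: representation_scale sum_distrib_left)

lemma rep_comp:
  assumes B: "finite B" "independent B" and A: "Vector_Spaces.linear s s A"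
    and AB: "\<And>c. c \<in> B \<Longrightarrow> A c \<in> span B" and x: "x \<in> span B"
  shows "representation B (A x) b' = (\<Sum>c\<in>B. representation B x c * representation B (A c) b')"
proof -
  have "x = (\<Sum>c\<in>B. s (representation B x c) c)"
    using sum_representation_eq[OF B(2) x B(1)] by simp
  then have "A x = (\<Sum>c\<in>B. A (s (representation B x c) c))"
    using lin_sum[OF A] by metis
  also have "\<dots> = (\<Sum>c\<in>B. s (representation B x c) (A c))"
    using lin_scale[OF A] by simp
  finally have Ax: "A x = (\<Sum>c\<in>B. s (representation B x c) (A c))" .
  have "representation B (A x) = (\<lambda>b. \<Sum>c\<in>B. representation B (s (representation B x c) (A c)) b)"
    unfolding Ax by (rule representation_sum[OF B(2)]) (use AB span_scale in blast)
  also have "\<dots> = (\<lambda>b. \<Sum>c\<in>B. representation B x c * representation B (A c) b)"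
    using representation_scale[OF B(2) AB] by simp
  finally show ?thesis by simp
qed

lemma tr_comm:
  assumes B: "finite B" "independent B"
    and A: "Vector_Spaces.linear s s A" and C: "Vector_Spaces.linear s s C"
    and AB: "\<And>c. c \<in> B \<Longrightarrow> A c \<in> span B" and CB: "\<And>c. c \<in> B \<Longrightarrow> C c \<in> span B"
  shows "tr B (\<lambda>x. A (C x)) = tr B (\<lambda>x. C (A x))"
proof -
  have "tr B (\<lambda>x. A (C x)) = (\<Sum>b\<in>B. \<Sum>c\<in>B. representation B (C b) c * representation B (A c) b)"
    unfolding tr_def using rep_comp[OF B A AB CB] by simp
  also have "\<dots> = (\<Sum>b\<in>B. \<Sum>c\<in>B. representation B (A c) b * representation B (C b) c)"
    by (simp add: mult.commute)
  also have "\<dots> = (\<Sum>c\<in>B. \<Sum>b\<in>B. representation B (A c) b * representation B (C b) c)"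
    by (rule sum.swap)
  also have "\<dots> = tr B (\<lambda>x. C (A x))"
    unfolding tr_def using rep_comp[OF B C CB AB] by simp
  finally show ?thesis .
qed

end


lemma voa_om0:
  assumes V: "is_voa s Y vac om c"
  shows "Y om 0 a = Y a (-2) vac"
proof -
  have vs: "vector_space s" using V unfolding is_voa_def by blast
  have "Y (Y om 0 a) (-1) vac = s (- of_int (-1)) (Y a (-1 - 1) vac)"
    using V unfolding is_voa_def by blast
  moreover have "Y (Y om 0 a) (-1) vac = Y om 0 a" using V unfolding is_voa_def by blast
  ultimately show ?thesis using vector_space.vector_space_assms(4)[OF vs] by simp
qed

lemma voa_vac_pos:
  assumes V: "is_voa s Y vac om c" and "n \<ge> 0"
  shows "Y a n vac = 0"
  using V assms(2) unfolding is_voa_def by blast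

lemma voa_vac_m1:
  assumes V: "is_voa s Y vac om c"
  shows "Y a (-1) vac = a"
  using V unfolding is_voa_def by blast

lemma mod_deriv:
  assumes V: "is_voa s Y vac om c" and M: "is_weak_module s Y vac sX YX"
  shows "YX (Y a (-2) vac) 1 w = - YX a 0 w"
proof -
  interpret X: cvs sX using M unfolding is_weak_module_def cvs_def by blast
  have linA: "\<And>n w. Vector_Spaces.linear s sX (\<lambda>a. YX a n w)" using M unfolding is_weak_module_def by blast
  have linX: "\<And>a n. Vector_Spaces.linear sX sX (YX a n)" using M unfolding is_weak_module_def by blast
  have vacX: "\<And>n w. YX vac n w = (if n = -1 then w else 0)" using M unfolding is_weak_module_def by blast
  have J: "fsum (\<lambda>i::nat. sX (of_int 2 gchoose i) (YX (Y a (-2 + int i) vac) (2 + (-1) - int i) w)) =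
        fsum (\<lambda>i::nat. sX ((-1) ^ i * (of_int (-2) gchoose i))
              (YX a (2 + (-2) - int i) (YX vac (-1 + int i) w)
               - sX (sgn_pow (-2)) (YX vac (-1 + (-2) - int i) (YX a (2 + int i) w))))"
    using M unfolding is_weak_module_def by blast
  have L: "fsum (\<lambda>i::nat. sX (of_int 2 gchoose i) (YX (Y a (-2 + int i) vac) (2 + (-1) - int i) w))
      = YX (Y a (-2) vac) 1 w + sX 2 (YX a 0 w)"
  proof -
    have "fsum (\<lambda>i::nat. sX (of_int 2 gchoose i) (YX (Y a (-2 + int i) vac) (2 + (-1) - int i) w))
      = (\<Sum>i\<in>{0,1}. sX (of_int 2 gchoose i) (YX (Y a (-2 + int i) vac) (2 + (-1) - int i) w))"
    proof (rule fsum_eq)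
      fix i :: nat assume "i \<notin> {0,1}"
      then have "-2 + int i \<ge> 0" by auto
      then have "Y a (-2 + int i) vac = 0" using voa_vac_pos[OF V] by blast
      then show "sX (of_int 2 gchoose i) (YX (Y a (-2 + int i) vac) (2 + (-1) - int i) w) = 0"
        using lin_zero[OF linA] by simp
    qed simp
    also have "\<dots> = YX (Y a (-2) vac) 1 w + sX 2 (YX a 0 w)"
      using voa_vac_m1[OF V] by simp
    finally show ?thesis .
  qed
  have R: "fsum (\<lambda>i::nat. sX ((-1) ^ i * (of_int (-2) gchoose i))
              (YX a (2 + (-2) - int i) (YX vac (-1 + int i) w)
               - sX (sgn_pow (-2)) (YX vac (-1 + (-2) - int i) (YX a (2 + int i) w)))) = YX a 0 w"
  proof -
    have "fsum (\<lambda>i::nat. sX ((-1) ^ i * (of_int (-2) gchoose i))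
              (YX a (2 + (-2) - int i) (YX vac (-1 + int i) w)
               - sX (sgn_pow (-2)) (YX vac (-1 + (-2) - int i) (YX a (2 + int i) w))))
      = (\<Sum>i\<in>{0}. sX ((-1) ^ i * (of_int (-2) gchoose i))
              (YX a (2 + (-2) - int i) (YX vac (-1 + int i) w)
               - sX (sgn_pow (-2)) (YX vac (-1 + (-2) - int i) (YX a (2 + int i) w))))"
    proof (rule fsum_eq)
      fix i :: nat assume "i \<notin> {0}"
      then show "sX ((-1) ^ i * (of_int (-2) gchoose i))
              (YX a (2 + (-2) - int i) (YX vac (-1 + int i) w)
               - sX (sgn_pow (-2)) (YX vac (-1 + (-2) - int i) (YX a (2 + int i) w))) = 0"
        using lin_zero[OF linX] by (simp add: vacX)
    qed simp
    also have "\<dots> = YX a 0 w" by (simp add: vacX)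
    finally show ?thesis .
  qed
  have two: "sX 2 v = v + v" for v
    using X.scale_left_distrib[of 1 1 v] by simp
  show ?thesis using J L R two by (simp add: algebra_simps) (metis add_diff_cancel_right' add_diff_cancel_left' diff_add_cancel minus_diff_eq diff_zero add.assoc)
qed

lemma fsum_single: "(\<And>i. i \<noteq> 0 \<Longrightarrow> f i = 0) \<Longrightarrow> fsum f = f 0"
  using fsum_eq[of "{0}" f] by auto

lemma fsum_two: "(\<And>i::nat. i \<ge> 2 \<Longrightarrow> f i = 0) \<Longrightarrow> fsum f = f 0 + f 1"
proof -
  assume h: "\<And>i::nat. i \<ge> 2 \<Longrightarrow> f i = 0"
  have "fsum f = sum f {0,1}" by (rule fsum_eq) (use h in auto)
  then show ?thesis by simp
qed

lemma gch0: "i \<noteq> 0 \<Longrightarrow> (0::complex) gchoose i = 0"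
  by (simp add: gbinomial_0_left)

lemma gch1: "i \<ge> 2 \<Longrightarrow> (1::complex) gchoose i = 0"
proof -
  assume "i \<ge> 2"
  then have "Suc 0 choose i = 0" by (simp add: binomial_eq_0)
  moreover have "complex_of_nat (Suc 0 choose i) = 1 gchoose i"
    using binomial_gbinomial[of 1 i, where 'a=complex] by simp
  ultimately show ?thesis by (metis of_nat_0)
qed

lemma wm_comm0:
  assumes M: "is_weak_module s Y vac sX YX"
  shows "YX (Y a 0 b) n w = YX a 0 (YX b n w) - YX b n (YX a 0 w)"
proof -
  interpret X: cvs sX using M unfolding is_weak_module_def cvs_def by blast
  have J: "fsum (\<lambda>i::nat. sX (of_int 0 gchoose i) (YX (Y a (0 + int i) b) (0 + n - int i) w)) =
        fsum (\<lambda>i::nat. sX ((-1) ^ i * (of_int 0 gchoose i))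
              (YX a (0 + 0 - int i) (YX b (n + int i) w)
               - sX (sgn_pow 0) (YX b (n + 0 - int i) (YX a (0 + int i) w))))"
    using M unfolding is_weak_module_def by blast
  have "fsum (\<lambda>i::nat. sX (of_int 0 gchoose i) (YX (Y a (0 + int i) b) (0 + n - int i) w)) = YX (Y a 0 b) n w"
    by (subst fsum_single) (simp_all add: gch0)
  moreover have "fsum (\<lambda>i::nat. sX ((-1) ^ i * (of_int 0 gchoose i))
              (YX a (0 + 0 - int i) (YX b (n + int i) w)
               - sX (sgn_pow 0) (YX b (n + 0 - int i) (YX a (0 + int i) w)))) =
       YX a 0 (YX b n w) - YX b n (YX a 0 w)"
    by (subst fsum_single) (simp_all add: gch0 sgn_pow_def)
  ultimately show ?thesis using J by simp
qed

lemma wm_comm1: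
  assumes M: "is_weak_module s Y vac sX YX"
  shows "YX (Y a 0 b) (n + 1) w + YX (Y a 1 b) n w = YX a 1 (YX b n w) - YX b n (YX a 1 w)"
proof -
  interpret X: cvs sX using M unfolding is_weak_module_def cvs_def by blast
  have J: "fsum (\<lambda>i::nat. sX (of_int 1 gchoose i) (YX (Y a (0 + int i) b) (1 + n - int i) w)) =
        fsum (\<lambda>i::nat. sX ((-1) ^ i * (of_int 0 gchoose i))
              (YX a (1 + 0 - int i) (YX b (n + int i) w)
               - sX (sgn_pow 0) (YX b (n + 0 - int i) (YX a (1 + int i) w))))"
    using M unfolding is_weak_module_def by blast
  have "fsum (\<lambda>i::nat. sX (of_int 1 gchoose i) (YX (Y a (0 + int i) b) (1 + n - int i) w))
     = YX (Y a 0 b) (n + 1) w + YX (Y a 1 b) n w"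
    by (subst fsum_two) (simp_all add: gch1 add.commute)
  moreover have "fsum (\<lambda>i::nat. sX ((-1) ^ i * (of_int 0 gchoose i))
              (YX a (1 + 0 - int i) (YX b (n + int i) w)
               - sX (sgn_pow 0) (YX b (n + 0 - int i) (YX a (1 + int i) w)))) =
       YX a 1 (YX b n w) - YX b n (YX a 1 w)"
    by (subst fsum_single) (simp_all add: gch0 sgn_pow_def)
  ultimately show ?thesis using J by simp
qed

lemma mod_L0_comm:
  assumes V: "is_voa s Y vac om c" and M: "is_weak_module s Y vac sX YX" and a: "a \<in> V1 Y s om"
  shows "YX om 1 (YX a 0 w) = YX a 0 (YX om 1 w)"
proof -
  have vs: "vector_space s" using V unfolding is_voa_def by blast
  have "Y om 1 a = a" using a vector_space.vector_space_assms(4)[OF vs] unfolding V1_def by simp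
  then have "YX (Y om 0 a) (0 + 1) w + YX a 0 w = YX om 1 (YX a 0 w) - YX a 0 (YX om 1 w)"
    using wm_comm1[OF M, of om a 0 w] by simp
  then show ?thesis using mod_deriv[OF V M] voa_om0[OF V] by simp
qed

lemma it_comm0:
  assumes T: "is_intertwining s Y vac om sU YU sW YW I"
  shows "I (YU a 0 x) n w = YW a 0 (I x n w) - I x n (YW a 0 w)"
proof -
  have J: "fsum (\<lambda>i::nat. sW (of_int 0 gchoose i) (I (YU a (0 + int i) x) (of_int 0 + n - of_nat i) w)) =
        fsum (\<lambda>i::nat. sW ((-1) ^ i * (of_int 0 gchoose i))
              (YW a (0 + 0 - int i) (I x (n + of_nat i) w)
               - sW (sgn_pow 0) (I x (n + of_int 0 - of_nat i) (YW a (0 + int i) w))))"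
    using T unfolding is_intertwining_def by blast
  have lin: "Vector_Spaces.linear sW sW (I x n)" for x n using T unfolding is_intertwining_def by blast
  have vs: "vector_space sW" using lin unfolding Vector_Spaces.linear_def by blast
  interpret X: cvs sW using vs unfolding cvs_def .
  have "fsum (\<lambda>i::nat. sW (of_int 0 gchoose i) (I (YU a (0 + int i) x) (of_int 0 + n - of_nat i) w)) = I (YU a 0 x) n w"
    by (subst fsum_single) (simp_all add: gch0)
  moreover have "fsum (\<lambda>i::nat. sW ((-1) ^ i * (of_int 0 gchoose i))
              (YW a (0 + 0 - int i) (I x (n + of_nat i) w)
               - sW (sgn_pow 0) (I x (n + of_int 0 - of_nat i) (YW a (0 + int i) w)))) =
       YW a 0 (I x n w) - I x n (YW a 0 w)"
    by (subst fsum_single) (simp_all add: gch0 sgn_pow_def)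
  ultimately show ?thesis using J by simp
qed

lemma it_L0:
  assumes T: "is_intertwining s Y vac om sU YU sW YW I"
  shows "YW om 1 (I x n w) - I x n (YW om 1 w) = I (YU om 1 x) n w - sW (n + 1) (I x n w)"
proof -
  have J: "fsum (\<lambda>i::nat. sW (of_int 1 gchoose i) (I (YU om (0 + int i) x) (of_int 1 + n - of_nat i) w)) =
        fsum (\<lambda>i::nat. sW ((-1) ^ i * (of_int 0 gchoose i))
              (YW om (1 + 0 - int i) (I x (n + of_nat i) w)
               - sW (sgn_pow 0) (I x (n + of_int 0 - of_nat i) (YW om (1 + int i) w))))"
    using T unfolding is_intertwining_def by blast
  have lin: "Vector_Spaces.linear sW sW (I x n)" for x n using T unfolding is_intertwining_def by blast
  have vs: "vector_space sW" using lin unfolding Vector_Spaces.linear_def by blast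
  interpret X: cvs sW using vs unfolding cvs_def .
  have D: "I (YU om 0 x) (n + 1) w = sW (- (n + 1)) (I x n w)"
    using T unfolding is_intertwining_def by (metis add_diff_cancel_right')
  have "fsum (\<lambda>i::nat. sW (of_int 1 gchoose i) (I (YU om (0 + int i) x) (of_int 1 + n - of_nat i) w))
     = I (YU om 0 x) (n + 1) w + I (YU om 1 x) n w"
    by (subst fsum_two) (simp_all add: gch1 add.commute)
  moreover have "fsum (\<lambda>i::nat. sW ((-1) ^ i * (of_int 0 gchoose i))
              (YW om (1 + 0 - int i) (I x (n + of_nat i) w)
               - sW (sgn_pow 0) (I x (n + of_int 0 - of_nat i) (YW om (1 + int i) w)))) =
       YW om 1 (I x n w) - I x n (YW om 1 w)"
    by (subst fsum_single) (simp_all add: gch0 sgn_pow_def)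
  ultimately have e1: "YW om 1 (I x n w) - I x n (YW om 1 w) = I (YU om 0 x) (n + 1) w + I (YU om 1 x) n w"
    using J by simp
  have e2: "I (YU om 0 x) (n + 1) w = - sW (n + 1) (I x n w)" using D X.scale_minus_left by metis
  show ?thesis unfolding e1 e2 by (simp add: algebra_simps)
qed



locale PS =
  fixes s :: "complex \<Rightarrow> 'v::ab_group_add \<Rightarrow> 'v" and Y :: "'v \<Rightarrow> int \<Rightarrow> 'v \<Rightarrow> 'v"
    and vac om :: 'v and c :: complex
    and sU :: "complex \<Rightarrow> 'u::ab_group_add \<Rightarrow> 'u" and YU :: "'v \<Rightarrow> int \<Rightarrow> 'u \<Rightarrow> 'u"
    and sW :: "complex \<Rightarrow> 'w::ab_group_add \<Rightarrow> 'w" and YW :: "'v \<Rightarrow> int \<Rightarrow> 'w \<Rightarrow> 'w"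
    and I :: "'u \<Rightarrow> complex \<Rightarrow> 'w \<Rightarrow> 'w"
  assumes V: "is_voa s Y vac om c"
    and MU: "is_module s Y vac om sU YU"
    and MW: "is_module s Y vac om sW YW"
    and IT: "is_intertwining s Y vac om sU YU sW YW I"
    and Lie: "V1_reductive_lie s Y om"
begin

lemma wmU: "is_weak_module s Y vac sU YU" using MU unfolding is_module_def by blast
lemma wmW: "is_weak_module s Y vac sW YW" using MW unfolding is_module_def by blast
lemma cvsU: "cvs sU" using wmU unfolding is_weak_module_def cvs_def by blast
lemma cvsW: "cvs sW" using wmW unfolding is_weak_module_def cvs_def by blast
lemma linYU: "Vector_Spaces.linear sU sU (YU a n)" using wmU unfolding is_weak_module_def by blast
lemma linYW: "Vector_Spaces.linear sW sW (YW a n)" using wmW unfolding is_weak_module_def by blast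
lemma linIu: "Vector_Spaces.linear sU sW (\<lambda>u. I u n w)" using IT unfolding is_intertwining_def by blast
lemma linIw: "Vector_Spaces.linear sW sW (I u n)" using IT unfolding is_intertwining_def by blast
lemma decU: "gen_eig_decomp sU (YU om 1)" using MU unfolding is_module_def by blast
lemma fdW: "fin_dim sW (gen_eig sW (YW om 1) lam)" using MW unfolding is_module_def by blast
lemma V1_closed: "x \<in> V1 Y s om \<Longrightarrow> y \<in> V1 Y s om \<Longrightarrow> Y x 0 y \<in> V1 Y s om"
  using Lie unfolding V1_reductive_lie_def by blast

lemma it_step:
  "YW om 1 (I x (lam' - 1) w) - sW lam (I x (lam' - 1) w)
     = I (YU om 1 x - sU lam' x) (lam' - 1) w + I x (lam' - 1) (YW om 1 w - sW lam w)"
proof -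
  interpret W: cvs sW by (rule cvsW)
  let ?n = "lam' - 1"
  have e: "YW om 1 (I x ?n w) - I x ?n (YW om 1 w) = I (YU om 1 x) ?n w - sW lam' (I x ?n w)"
    using it_L0[OF IT, of x ?n w] by simp
  have "I (YU om 1 x - sU lam' x) ?n w = I (YU om 1 x) ?n w - sW lam' (I x ?n w)"
    using lin_diff[OF linIu] lin_scale[OF linIu] by metis
  moreover have "I x ?n (YW om 1 w - sW lam w) = I x ?n (YW om 1 w) - sW lam (I x ?n w)"
    using lin_diff[OF linIw] lin_scale[OF linIw] by metis
  moreover have "YW om 1 (I x ?n w) = I (YU om 1 x) ?n w - sW lam' (I x ?n w) + I x ?n (YW om 1 w)"
    using e by (metis diff_eq_eq)
  ultimately show ?thesis by (simp only:) (simp add: algebra_simps)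
qed

lemma it_nil:
  "Dp sU (YU om 1) lam' p x = 0 \<Longrightarrow> Dp sW (YW om 1) lam q w = 0 \<Longrightarrow>
   Dp sW (YW om 1) lam (p + q) (I x (lam' - 1) w) = 0"
proof (induction p arbitrary: q x w)
  case 0
  then have "x = 0" by simp
  then show ?case using lin_zero[OF linIu] lin_zero[OF cvs.Dp_lin[OF cvsW linYW]] by simp
next
  case (Suc p)
  note outer = Suc.IH and px = Suc.prems(1)
  show ?case using Suc.prems(2)
  proof (induction q arbitrary: w)
    case 0
    then have "w = 0" by simp
    then show ?case using lin_zero[OF linIw] lin_zero[OF cvs.Dp_lin[OF cvsW linYW]] by simp
  next
    case (Suc q)
    let ?D = "Dp sW (YW om 1) lam (p + Suc q)"
    have L: "Vector_Spaces.linear sW sW ?D" by (rule cvs.Dp_lin[OF cvsW linYW])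
    have "Dp sW (YW om 1) lam (Suc p + Suc q) (I x (lam' - 1) w)
        = ?D (YW om 1 (I x (lam' - 1) w) - sW lam (I x (lam' - 1) w))"
      by (simp add: Dp_Suc')
    also have "\<dots> = ?D (I (YU om 1 x - sU lam' x) (lam' - 1) w) + ?D (I x (lam' - 1) (YW om 1 w - sW lam w))"
      unfolding it_step by (rule lin_add[OF L])
    also have "?D (I (YU om 1 x - sU lam' x) (lam' - 1) w) = 0"
      using outer[where q="Suc q" and x="YU om 1 x - sU lam' x" and w=w] px Suc.prems
      by (simp add: Dp_Suc')
    also have "?D (I x (lam' - 1) (YW om 1 w - sW lam w)) = 0"
      using Suc.IH[of "YW om 1 w - sW lam w"] Suc.prems by (simp add: Dp_Suc')
    finally show ?case by simp
  qed
qed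

lemma it_pres:
  assumes "x \<in> gen_eig sU (YU om 1) lam'" "w \<in> gen_eig sW (YW om 1) lam"
  shows "I x (lam' - 1) w \<in> gen_eig sW (YW om 1) lam"
  using assms it_nil unfolding gen_eig_Dp by blast

lemma a0U_comm: "a \<in> V1 Y s om \<Longrightarrow> YU om 1 (YU a 0 x) = YU a 0 (YU om 1 x)"
  by (rule mod_L0_comm[OF V wmU])
lemma a0W_comm: "a \<in> V1 Y s om \<Longrightarrow> YW om 1 (YW a 0 x) = YW a 0 (YW om 1 x)"
  by (rule mod_L0_comm[OF V wmW])

lemma a0U_Dp: "a \<in> V1 Y s om \<Longrightarrow> YU a 0 (Dp sU (YU om 1) lam N x) = Dp sU (YU om 1) lam N (YU a 0 x)"
  by (rule cvs.Dp_comm[OF cvsU]) (simp_all add: a0U_comm lin_scale[OF linYU] lin_diff[OF linYU])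
lemma a0W_Dp: "a \<in> V1 Y s om \<Longrightarrow> YW a 0 (Dp sW (YW om 1) lam N x) = Dp sW (YW om 1) lam N (YW a 0 x)"
  by (rule cvs.Dp_comm[OF cvsW]) (simp_all add: a0W_comm lin_scale[OF linYW] lin_diff[OF linYW])

lemma a0U_pres: "a \<in> V1 Y s om \<Longrightarrow> y \<in> gen_eig sU (YU om 1) lam \<Longrightarrow> YU a 0 y \<in> gen_eig sU (YU om 1) lam"
proof -
  assume a: "a \<in> V1 Y s om" and "y \<in> gen_eig sU (YU om 1) lam"
  then obtain N where "Dp sU (YU om 1) lam N y = 0" unfolding gen_eig_Dp by blast
  then have "Dp sU (YU om 1) lam N (YU a 0 y) = 0" using a0U_Dp[OF a] lin_zero[OF linYU] by metis
  then show ?thesis unfolding gen_eig_Dp by blast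
qed
lemma a0W_pres: "a \<in> V1 Y s om \<Longrightarrow> y \<in> gen_eig sW (YW om 1) lam \<Longrightarrow> YW a 0 y \<in> gen_eig sW (YW om 1) lam"
proof -
  assume a: "a \<in> V1 Y s om" and "y \<in> gen_eig sW (YW om 1) lam"
  then obtain N where "Dp sW (YW om 1) lam N y = 0" unfolding gen_eig_Dp by blast
  then have "Dp sW (YW om 1) lam N (YW a 0 y) = 0" using a0W_Dp[OF a] lin_zero[OF linYW] by metis
  then show ?thesis unfolding gen_eig_Dp by blast
qed

definition Qp :: "complex \<Rightarrow> complex \<Rightarrow> nat \<Rightarrow> 'w \<Rightarrow> 'w" where
  "Qp tau lam N w = sW (exp (2 * pi * \<i> * tau * (lam - c / 24)))
      (\<Sum>k<N. sW ((2 * pi * \<i> * tau) ^ k / fact k) (Dp sW (YW om 1) lam k w))"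

lemma Qp_lin: "Vector_Spaces.linear sW sW (Qp tau lam N)"
proof -
  interpret W: cvs sW by (rule cvsW)
  show ?thesis
  proof (rule linI[OF W.vector_space_axioms W.vector_space_axioms])
    fix x y
    show "Qp tau lam N (x + y) = Qp tau lam N x + Qp tau lam N y"
      unfolding Qp_def by (simp add: lin_add[OF W.Dp_lin[OF linYW]] sum.distrib W.scale_right_distrib)
  next
    fix r x
    show "Qp tau lam N (sW r x) = sW r (Qp tau lam N x)"
      unfolding Qp_def by (simp add: lin_scale[OF W.Dp_lin[OF linYW]] W.scale_sum_right ac_simps)
  qed
qed

lemma Qp_pres: "w \<in> gen_eig sW (YW om 1) lam \<Longrightarrow> Qp tau lam N w \<in> gen_eig sW (YW om 1) lam"
proof -
  interpret W: cvs sW by (rule cvsW)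
  assume w: "w \<in> gen_eig sW (YW om 1) lam"
  have S: "W.subspace (gen_eig sW (YW om 1) lam)" by (rule W.gen_eig_subspace[OF linYW])
  show ?thesis unfolding Qp_def
    by (intro W.subspace_scale[OF S] W.subspace_sum[OF S] W.Dp_pres[OF linYW w])
qed

lemma Qp_comm: "a \<in> V1 Y s om \<Longrightarrow> YW a 0 (Qp tau lam N w) = Qp tau lam N (YW a 0 w)"
  unfolding Qp_def by (simp add: lin_scale[OF linYW] lin_sum[OF linYW] a0W_Dp)

lemma q_op_eq:
  assumes "Dp sW (YW om 1) lam N w = 0"
  shows "q_op sW (YW om 1) c tau lam w = Qp tau lam N w"
proof -
  interpret W: cvs sW by (rule cvsW)
  have q: "q_op sW (YW om 1) c tau lam w = sW (exp (2 * pi * \<i> * tau * (lam - c / 24)))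
       (fsum (\<lambda>k::nat. sW ((2 * pi * \<i> * tau) ^ k / fact k) (Dp sW (YW om 1) lam k w)))"
    unfolding q_op_def Dp_def ..
  have "fsum (\<lambda>k::nat. sW ((2 * pi * \<i> * tau) ^ k / fact k) (Dp sW (YW om 1) lam k w))
      = (\<Sum>k<N. sW ((2 * pi * \<i> * tau) ^ k / fact k) (Dp sW (YW om 1) lam k w))"
  proof (rule fsum_eq)
    fix k assume "k \<notin> {..<N}"
    then have "Dp sW (YW om 1) lam k w = 0" using W.Dp_high[OF linYW assms] by simp
    then show "sW ((2 * pi * \<i> * tau) ^ k / fact k) (Dp sW (YW om 1) lam k w) = 0"
      by simp
  qed simp
  then show ?thesis by (simp only: q Qp_def)
qed

lemma tr_gen:
  assumes B: "finite B" "\<not> module.dependent sW B" "module.span sW B = gen_eig sW (YW om 1) lam"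
    and a: "a \<in> V1 Y s om" and y: "y \<in> gen_eig sU (YU om 1) lam'"
  shows "cvs.tr sW B (\<lambda>w. I (YU a 0 y) (lam' - 1) (Qp tau lam N w)) = 0"
proof -
  interpret W: cvs sW by (rule cvsW)
  let ?S = "gen_eig sW (YW om 1) lam"
  let ?A = "YW a 0" and ?C = "\<lambda>w. I y (lam' - 1) (Qp tau lam N w)"
  have eq: "I (YU a 0 y) (lam' - 1) (Qp tau lam N w) = ?A (?C w) - ?C (?A w)" for w
    using it_comm0[OF IT] Qp_comm[OF a] by simp
  have AS: "?A x \<in> ?S" if "x \<in> ?S" for x using a0W_pres[OF a that] .
  have CS: "?C x \<in> ?S" if "x \<in> ?S" for x using it_pres[OF y Qp_pres[OF that]] .
  have bS: "b \<in> ?S" if "b \<in> B" for b using W.span_base[OF that] B(3) by blast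
  have linC: "Vector_Spaces.linear sW sW ?C"
    using Vector_Spaces.linear_compose[OF Qp_lin linIw] by (simp add: o_def)
  have "cvs.tr sW B (\<lambda>w. I (YU a 0 y) (lam' - 1) (Qp tau lam N w)) = W.tr B (\<lambda>w. ?A (?C w) - ?C (?A w))"
    by (simp only: eq)
  also have "\<dots> = W.tr B (\<lambda>w. ?A (?C w)) - W.tr B (\<lambda>w. ?C (?A w))"
    by (rule W.tr_diff[OF B(2)]) (use AS CS bS B(3) in auto)
  also have "W.tr B (\<lambda>w. ?A (?C w)) = W.tr B (\<lambda>w. ?C (?A w))"
    by (rule W.tr_comm[OF B(1,2) linYW linC]) (use AS CS bS B(3) in auto)
  finally show ?thesis by simp
qed

lemma tr_Z:
  assumes B: "finite B" "\<not> module.dependent sW B" "module.span sW B = gen_eig sW (YW om 1) lam"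
    and z: "z \<in> module.span sU {YU a 0 y | a y. a \<in> V1 Y s om \<and> y \<in> gen_eig sU (YU om 1) lam'}"
  shows "cvs.tr sW B (\<lambda>w. I z (lam' - 1) (Qp tau lam N w)) = 0"
proof -
  interpret W: cvs sW by (rule cvsW)
  interpret U: cvs sU by (rule cvsU)
  let ?S = "gen_eig sW (YW om 1) lam"
  let ?T = "{z. z \<in> gen_eig sU (YU om 1) lam' \<and> W.tr B (\<lambda>w. I z (lam' - 1) (Qp tau lam N w)) = 0}"
  have bS: "b \<in> ?S" if "b \<in> B" for b using W.span_base[OF that] B(3) by blast
  have mem: "I z (lam' - 1) (Qp tau lam N b) \<in> W.span B" if "z \<in> gen_eig sU (YU om 1) lam'" "b \<in> B" for z b
    using it_pres[OF that(1) Qp_pres[OF bS[OF that(2)]]] B(3) by simp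
  have sub: "U.subspace ?T"
    unfolding U.subspace_def
  proof (intro conjI ballI allI)
    show "0 \<in> ?T"
      using U.subspace_0[OF U.gen_eig_subspace[OF linYU]] lin_zero[OF linIu] W.tr_zero by simp
  next
    fix x y assume x: "x \<in> ?T" and y: "y \<in> ?T"
    have "W.tr B (\<lambda>w. I (x + y) (lam' - 1) (Qp tau lam N w))
        = W.tr B (\<lambda>w. I x (lam' - 1) (Qp tau lam N w) + I y (lam' - 1) (Qp tau lam N w))"
      using lin_add[OF linIu] by simp
    also have "\<dots> = 0" using W.tr_add[OF B(2)] mem x y by simp
    finally show "x + y \<in> ?T"
      using U.subspace_add[OF U.gen_eig_subspace[OF linYU]] x y by simp
  next
    fix r x assume x: "x \<in> ?T"
    have "W.tr B (\<lambda>w. I (sU r x) (lam' - 1) (Qp tau lam N w))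
        = W.tr B (\<lambda>w. sW r (I x (lam' - 1) (Qp tau lam N w)))"
      using lin_scale[OF linIu] by simp
    also have "\<dots> = 0" using W.tr_scale[OF B(2)] mem x by simp
    finally show "sU r x \<in> ?T"
      using U.subspace_scale[OF U.gen_eig_subspace[OF linYU]] x by simp
  qed
  have gens: "{YU a 0 y | a y. a \<in> V1 Y s om \<and> y \<in> gen_eig sU (YU om 1) lam'} \<subseteq> ?T"
    using tr_gen[OF B] a0U_pres by blast
  have "z \<in> ?T" using U.span_minimal[OF gens sub] z by blast
  then show ?thesis by simp
qed

lemma simple_in_span:
  assumes S: "is_simple_submod sU (V1 Y s om) (\<lambda>a x. YU a 0 x) S"
    and nt: "\<exists>a\<in>V1 Y s om. \<exists>x\<in>S. YU a 0 x \<noteq> 0"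
  shows "S \<subseteq> module.span sU {YU a 0 y | a y. a \<in> V1 Y s om}"
proof -
  interpret U: cvs sU by (rule cvsU)
  let ?G = "{YU a 0 x | a x. a \<in> V1 Y s om \<and> x \<in> S}"
  let ?T = "U.span ?G"
  have Ssub: "U.subspace S" and Sc: "\<And>a x. a \<in> V1 Y s om \<Longrightarrow> x \<in> S \<Longrightarrow> YU a 0 x \<in> S"
    using S unfolding is_simple_submod_def is_submod_def by auto
  have TS: "?T \<subseteq> S" by (rule U.span_minimal) (use Sc Ssub in auto)
  have Tc: "YU b 0 x \<in> ?T" if b: "b \<in> V1 Y s om" and x: "x \<in> ?T" for b x
  proof -
    let ?P = "{x. YU b 0 x \<in> ?T}"
    have "U.subspace ?P" unfolding U.subspace_def
    proof (intro conjI ballI allI)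
      show "0 \<in> ?P" using lin_zero[OF linYU] U.span_zero by simp
    next
      fix x y assume "x \<in> ?P" "y \<in> ?P"
      then show "x + y \<in> ?P" using lin_add[OF linYU, of b 0 x y] U.span_add by simp
    next
      fix r x assume "x \<in> ?P"
      then show "sU r x \<in> ?P" using lin_scale[OF linYU, of b 0 r x] U.span_scale by simp
    qed
    moreover have "?G \<subseteq> ?P"
    proof
      fix g assume "g \<in> ?G"
      then obtain a x where ax: "a \<in> V1 Y s om" "x \<in> S" "g = YU a 0 x" by blast
      have "YU (Y b 0 a) 0 x = YU b 0 (YU a 0 x) - YU a 0 (YU b 0 x)" by (rule wm_comm0[OF wmU])
      then have e: "YU b 0 g = YU a 0 (YU b 0 x) + YU (Y b 0 a) 0 x" using ax(3) by (simp add: algebra_simps)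
      have "YU a 0 (YU b 0 x) \<in> ?T" using ax Sc[OF b ax(2)] by (intro U.span_base) blast
      moreover have "YU (Y b 0 a) 0 x \<in> ?T" using ax V1_closed[OF b ax(1)] by (intro U.span_base) blast
      ultimately show "g \<in> ?P" using e U.span_add by simp
    qed
    ultimately have "?T \<subseteq> ?P" by (rule U.span_minimal[rotated])
    then show ?thesis using x by blast
  qed
  have Tsub: "is_submod sU (V1 Y s om) (\<lambda>a x. YU a 0 x) ?T"
    unfolding is_submod_def using Tc by simp
  have "?T \<noteq> {0}"
  proof -
    obtain a x where "a \<in> V1 Y s om" "x \<in> S" "YU a 0 x \<noteq> 0" using nt by blast
    then have "YU a 0 x \<in> ?T" "YU a 0 x \<noteq> 0" by (blast intro: U.span_base)+
    then show ?thesis by blast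
  qed
  moreover have "\<forall>T. is_submod sU (V1 Y s om) (\<lambda>a x. YU a 0 x) T \<and> T \<subseteq> S \<longrightarrow> T = {0} \<or> T = S"
    using S unfolding is_simple_submod_def by blast
  ultimately have "?T = S" using Tsub TS by blast
  moreover have "?T \<subseteq> U.span {YU a 0 y | a y. a \<in> V1 Y s om}"
    by (rule U.span_mono) blast
  ultimately show ?thesis by simp
qed

lemma nontriv_in_span:
  assumes "u \<in> nontriv_part sU (V1 Y s om) (\<lambda>a x. YU a 0 x) M"
  shows "u \<in> module.span sU {YU a 0 y | a y. a \<in> V1 Y s om}"
proof -
  interpret U: cvs sU by (rule cvsU)
  have "\<Union>{S. is_simple_submod sU (V1 Y s om) (\<lambda>a x. YU a 0 x) S \<and> S \<subseteq> M \<and>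
      (\<exists>a\<in>V1 Y s om. \<exists>x\<in>S. YU a 0 x \<noteq> 0)} \<subseteq> U.span {YU a 0 y | a y. a \<in> V1 Y s om}"
    using simple_in_span by blast
  then have "nontriv_part sU (V1 Y s om) (\<lambda>a x. YU a 0 x) M \<subseteq> U.span {YU a 0 y | a y. a \<in> V1 Y s om}"
    unfolding nontriv_part_def by (rule U.span_minimal) simp
  then show ?thesis using assms by blast
qed

lemma comp_in_Z:
  assumes "u \<in> module.span sU {YU a 0 y | a y. a \<in> V1 Y s om}"
  shows "gen_comp sU (YU om 1) u lam' \<in> module.span sU {YU a 0 y | a y. a \<in> V1 Y s om \<and> y \<in> gen_eig sU (YU om 1) lam'}"
proof -
  interpret U: cvs sU by (rule cvsU)
  let ?Z = "\<lambda>l. U.span {YU a 0 y | a y. a \<in> V1 Y s om \<and> y \<in> gen_eig sU (YU om 1) l}"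
  let ?P = "{x. \<forall>l. gen_comp sU (YU om 1) x l \<in> ?Z l}"
  have linL: "Vector_Spaces.linear sU sU (YU om 1)" by (rule linYU)
  have sub: "U.subspace ?P" unfolding U.subspace_def
  proof (intro conjI ballI allI)
    have "gen_comp sU (YU om 1) 0 = (\<lambda>l. 0)"
      by (rule U.gen_comp_eq[OF linL decU], rule U.dec_intro[of "{}"])
         (simp_all add: U.subspace_0[OF U.gen_eig_subspace[OF linL]])
    then show "0 \<in> ?P" using U.span_zero by simp
  next
    fix x y assume "x \<in> ?P" "y \<in> ?P"
    then show "x + y \<in> ?P" using U.gen_comp_add[OF linL decU] U.span_add by simp
  next
    fix r x assume x: "x \<in> ?P"
    have "gen_comp sU (YU om 1) (sU r x) = (\<lambda>l. sU r (gen_comp sU (YU om 1) x l))"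
      by (rule U.gen_comp_map[OF linL decU U.linear_scale_self]) (simp add: lin_scale[OF linL])
    then show "sU r x \<in> ?P" using x U.span_scale by simp
  qed
  have "{YU a 0 y | a y. a \<in> V1 Y s om} \<subseteq> ?P"
  proof
    fix g assume "g \<in> {YU a 0 y | a y. a \<in> V1 Y s om}"
    then obtain a y where a: "a \<in> V1 Y s om" and g: "g = YU a 0 y" by blast
    have "gen_comp sU (YU om 1) g = (\<lambda>l. YU a 0 (gen_comp sU (YU om 1) y l))"
      unfolding g by (rule U.gen_comp_map[OF linL decU linYU]) (simp add: a0U_comm[OF a])
    moreover have "gen_comp sU (YU om 1) y l \<in> gen_eig sU (YU om 1) l" for l
      using U.gen_comp_dec[OF linL decU] unfolding U.dec_def by blast
    ultimately show "g \<in> ?P" using a by (auto intro: U.span_base)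
  qed
  then have "U.span {YU a 0 y | a y. a \<in> V1 Y s om} \<subseteq> ?P" using sub by (rule U.span_minimal)
  then show ?thesis using assms by blast
qed

lemma main:
  assumes u: "u \<in> nontriv_part sU (V1 Y s om) (\<lambda>a x. YU a 0 x) M"
  shows "torus_1pt_zero sU YU om c sW YW I u"
  unfolding torus_1pt_zero_def
proof (intro allI)
  fix lam tau
  interpret W: cvs sW by (rule cvsW)
  interpret U: cvs sU by (rule cvsU)
  let ?S = "gen_eig sW (YW om 1) lam"
  let ?f = "\<lambda>w. zero_mode sU YU om I u (q_op sW (YW om 1) c tau lam w)"
  let ?z = "gen_comp sU (YU om 1) u"
  let ?F = "{l. ?z l \<noteq> 0}"
  have uG: "u \<in> U.span {YU a 0 y | a y. a \<in> V1 Y s om}" by (rule nontriv_in_span[OF u])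
  have zdec: "?z l \<in> gen_eig sU (YU om 1) l" for l
    using U.gen_comp_dec[OF linYU decU] unfolding U.dec_def by blast
  have key: "W.tr B ?f = 0" if B: "finite B" "W.independent B" "W.span B = ?S" for B
  proof -
    have bS: "b \<in> ?S" if "b \<in> B" for b using W.span_base[OF that] B(3) by blast
    have "\<forall>b\<in>B. \<exists>N. Dp sW (YW om 1) lam N b = 0" using bS unfolding gen_eig_Dp by blast
    then obtain Nf where Nf: "\<And>b. b \<in> B \<Longrightarrow> Dp sW (YW om 1) lam (Nf b) b = 0" by metis
    define N where "N = sum Nf B"
    have DN: "Dp sW (YW om 1) lam N b = 0" if "b \<in> B" for b
      using W.Dp_high[OF linYW Nf[OF that]] member_le_sum[OF that _ B(1), of Nf] unfolding N_def by simp
    have "W.tr B ?f = W.tr B (\<lambda>w. \<Sum>l\<in>?F. I (?z l) (l - 1) (Qp tau lam N w))"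
      by (rule W.tr_cong) (simp add: zero_mode_def q_op_eq[OF DN])
    also have "\<dots> = (\<Sum>l\<in>?F. W.tr B (\<lambda>w. I (?z l) (l - 1) (Qp tau lam N w)))"
      by (rule W.tr_sum[OF B(2)]) (use it_pres[OF zdec Qp_pres[OF bS]] B(3) in simp)
    also have "\<dots> = 0"
      using tr_Z[OF B comp_in_Z[OF uG]] by simp
    finally show ?thesis .
  qed
  obtain B0 where B0: "finite B0" "B0 \<subseteq> ?S" "W.span B0 = ?S" using fdW unfolding fin_dim_def by blast
  obtain B where B: "B \<subseteq> B0" "W.independent B" "B0 \<subseteq> W.span B"
    using W.maximal_independent_subset[of B0] by blast
  have fB: "finite B" using finite_subset[OF B(1) B0(1)] .
  have sB: "W.span B = ?S"
  proof
    show "W.span B \<subseteq> ?S" using W.span_mono[OF B(1)] B0(3) by simp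
    show "?S \<subseteq> W.span B" using W.span_minimal[OF B(3) W.subspace_span] B0(3) by simp
  qed
  let ?P = "\<lambda>t. \<exists>B. finite B \<and> W.independent B \<and> W.span B = ?S \<and>
       t = (\<Sum>b\<in>B. W.representation B (?f b) b)"
  have "?P (W.tr B ?f)" using fB B(2) sB unfolding W.tr_def by blast
  then have "?P (SOME t. ?P t)" by (rule someI)
  then obtain B' where B': "finite B'" "W.independent B'" "W.span B' = ?S"
    and t: "(SOME t. ?P t) = W.tr B' ?f" unfolding W.tr_def by blast
  have "(SOME t. ?P t) = 0" using t key[OF B'] by simp
  then show "trace_on sW ?S ?f = 0" unfolding trace_on_def .
qed

end

theorem proposition2p8:
  fixes s :: "complex \<Rightarrow> 'v::ab_group_add \<Rightarrow> 'v" and Y :: "'v \<Rightarrow> int \<Rightarrow> 'v \<Rightarrow> 'v"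
    and vac om :: 'v and c :: complex
    and sU :: "complex \<Rightarrow> 'u::ab_group_add \<Rightarrow> 'u" and YU :: "'v \<Rightarrow> int \<Rightarrow> 'u \<Rightarrow> 'u"
    and sW :: "complex \<Rightarrow> 'w::ab_group_add \<Rightarrow> 'w" and YW :: "'v \<Rightarrow> int \<Rightarrow> 'w \<Rightarrow> 'w"
    and I :: "'u \<Rightarrow> complex \<Rightarrow> 'w \<Rightarrow> 'w"
    and m :: complex and u :: 'u
  assumes "is_voa s Y vac om c"
    and "is_module s Y vac om sU YU"
    and "gen_eig_decomp sU (L_sq sU YU vac om c 0)"
    and "V1_reductive_lie s Y om"
    and "is_semisimple sU (V1 Y s om) (\<lambda>a x. YU a 0 x) (U_sq sU YU vac om c m)"
    and "u \<in> nontriv_part sU (V1 Y s om) (\<lambda>a x. YU a 0 x) (U_sq sU YU vac om c m)"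
    and "is_module s Y vac om sW YW"
    and "is_intertwining s Y vac om sU YU sW YW I"
  shows "torus_1pt_zero sU YU om c sW YW I u"
proof -
  interpret PS s Y vac om c sU YU sW YW I
    by (unfold_locales) (use assms in auto)
  show ?thesis by (rule main[OF assms(6)])
qed

end
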